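(* Let $M$ be a finitely generated monoid which is quasi-isometric to a finitely generated group. Then $M$ is a group.
   Context: For a monoid $S$ generated by a finite set $A$, $d_A(x,y)=\inf\{|w|:w\in A^*,\ xw=y\}$ ($A^*$ the free monoid on $A$, $\inf\emptyset=\infty$). A map $f:(S,d_A)\to(T,d_B)$ is a quasi-isometry if there are $1\le\lambda<\infty$, $0<\epsilon<\infty$, $0\le\mu<\infty$ with $\frac1\lambda d_A(x,y)-\epsilon\le d_B(f(x),f(y))\le\lambda d_A(x,y)+\epsilon$ for all $x,y$, and for each $t\in T$ some $x\in S$ with $\max(d_B(t,f(x)),d_B(f(x),t))\le\mu$. Finitely generated monoids (groups being regarded as monoids) $S,T$ are quasi-isometric if $(S,d_A)$, $(T,d_B)$ are quasi-isometric for some finite (monoid) generating sets $A,B$. *)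

theory Defs
  imports "HOL-Algebra.Group" "HOL-Library.Extended_Real"
begin

definition word_prod :: "('a, 'b) monoid_scheme \<Rightarrow> 'a list \<Rightarrow> 'a" where
  "word_prod S w = foldr (\<lambda>a b. a \<otimes>\<^bsub>S\<^esub> b) w \<one>\<^bsub>S\<^esub>"

definition fin_mon_gen :: "('a, 'b) monoid_scheme \<Rightarrow> 'a set \<Rightarrow> bool" where
  "fin_mon_gen S A \<longleftrightarrow> finite A \<and> A \<subseteq> carrier S \<and>
     (\<forall>x \<in> carrier S. \<exists>w. set w \<subseteq> A \<and> word_prod S w = x)"

definition finitely_generated_monoid :: "('a, 'b) monoid_scheme \<Rightarrow> bool" where
  "finitely_generated_monoid S \<longleftrightarrow> (\<exists>A. fin_mon_gen S A)"

text \<open>Directed word distance; Inf of the empty set is \<infinity>.\<close>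
definition word_dist :: "('a, 'b) monoid_scheme \<Rightarrow> 'a set \<Rightarrow> 'a \<Rightarrow> 'a \<Rightarrow> ereal" where
  "word_dist S A x y = Inf {ereal (real (length w)) | w. set w \<subseteq> A \<and> x \<otimes>\<^bsub>S\<^esub> word_prod S w = y}"

definition quasi_isometry ::
  "('a, 'b) monoid_scheme \<Rightarrow> 'a set \<Rightarrow> ('c, 'd) monoid_scheme \<Rightarrow> 'c set \<Rightarrow> ('a \<Rightarrow> 'c) \<Rightarrow> bool" where
  "quasi_isometry S A T B f \<longleftrightarrow> f \<in> carrier S \<rightarrow> carrier T \<and>
     (\<exists>(lam::real) (eps::real) (mu::real). 1 \<le> lam \<and> 0 < eps \<and> 0 \<le> mu \<and>
       (\<forall>x \<in> carrier S. \<forall>y \<in> carrier S.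
          ereal (1 / lam) * word_dist S A x y - ereal eps \<le> word_dist T B (f x) (f y) \<and>
          word_dist T B (f x) (f y) \<le> ereal lam * word_dist S A x y + ereal eps) \<and>
       (\<forall>t \<in> carrier T. \<exists>x \<in> carrier S.
          max (word_dist T B t (f x)) (word_dist T B (f x) t) \<le> ereal mu))"

definition quasi_isometric :: "('a, 'b) monoid_scheme \<Rightarrow> ('c, 'd) monoid_scheme \<Rightarrow> bool" where
  "quasi_isometric S T \<longleftrightarrow>
     (\<exists>A B f. fin_mon_gen S A \<and> fin_mon_gen T B \<and> quasi_isometry S A T B f)"

end

theory Submission
  imports Defs
begin

lemma word_prod_carrier:
  assumes "monoid S" "set w \<subseteq> carrier S"
  shows "word_prod S w \<in> carrier S"
  using assms(2)
  by (induction w) (auto simp: word_prod_def monoid.m_closed[OF assms(1)] monoid.one_closed[OF assms(1)])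

lemma group_dist_finite:
  assumes "group G" "fin_mon_gen G B" "x \<in> carrier G" "y \<in> carrier G"
  shows "word_dist G B x y < \<infinity>"
proof -
  have "inv\<^bsub>G\<^esub> x \<otimes>\<^bsub>G\<^esub> y \<in> carrier G" using assms by (simp add: group.subgroupE(3) group.inv_closed group.subgroup_self monoid.m_closed group.is_monoid)
  then obtain w where w: "set w \<subseteq> B" "word_prod G w = inv\<^bsub>G\<^esub> x \<otimes>\<^bsub>G\<^esub> y"
    using assms(2) unfolding fin_mon_gen_def by blast
  have "x \<otimes>\<^bsub>G\<^esub> word_prod G w = y" using w assms
    by (simp add: group.inv_solve_left' group.inv_closed monoid.m_assoc group.is_monoid group.r_inv monoid.l_one
        flip: monoid.m_assoc)
  then have "ereal (real (length w)) \<in> {ereal (real (length w)) | w. set w \<subseteq> B \<and> x \<otimes>\<^bsub>G\<^esub> word_prod G w = y}"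
    using w by blast
  then have "word_dist G B x y \<le> ereal (real (length w))"
    unfolding word_dist_def by (rule Inf_lower)
  then show ?thesis using order.strict_trans1 by fastforce
qed

theorem proposition8p1:
  fixes M :: "('a, 'b) monoid_scheme" and G :: "('c, 'd) monoid_scheme"
  assumes "monoid M" and "finitely_generated_monoid M"
    and "group G" and "finitely_generated_monoid G"
    and "quasi_isometric M G"
  shows "group M"
proof -
  obtain A B f where A: "fin_mon_gen M A" and B: "fin_mon_gen G B" and q: "quasi_isometry M A G B f"
    using assms(5) unfolding quasi_isometric_def by blast
  obtain lam eps where le: "1 \<le> lam" "0 < eps" and
    ineq: "\<And>x y. x \<in> carrier M \<Longrightarrow> y \<in> carrier M \<Longrightarrow>
          ereal (1 / lam) * word_dist M A x y - ereal eps \<le> word_dist G B (f x) (f y)"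
    using q unfolding quasi_isometry_def by blast
  have fc: "f \<in> carrier M \<rightarrow> carrier G" using q unfolding quasi_isometry_def by blast
  have rinv: "\<exists>y \<in> carrier M. x \<otimes>\<^bsub>M\<^esub> y = \<one>\<^bsub>M\<^esub>" if x: "x \<in> carrier M" for x
  proof -
    have one: "\<one>\<^bsub>M\<^esub> \<in> carrier M" using assms(1) by (simp add: monoid.one_closed)
    have fin: "word_dist G B (f x) (f \<one>\<^bsub>M\<^esub>) < \<infinity>"
      using group_dist_finite[OF assms(3) B] fc x one by blast
    have "word_dist M A x \<one>\<^bsub>M\<^esub> \<noteq> \<infinity>"
    proof
      assume inf: "word_dist M A x \<one>\<^bsub>M\<^esub> = \<infinity>"
      have "0 < 1 / lam" using le by simp
      then have "ereal (1 / lam) * word_dist M A x \<one>\<^bsub>M\<^esub> - ereal eps = \<infinity>"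
        using inf by simp
      with ineq[OF x one] fin show False by simp
    qed
    then have "{ereal (real (length w)) | w. set w \<subseteq> A \<and> x \<otimes>\<^bsub>M\<^esub> word_prod M w = \<one>\<^bsub>M\<^esub>} \<noteq> {}"
      unfolding word_dist_def by (metis Inf_empty top_ereal_def)
    then obtain w where w: "set w \<subseteq> A" "x \<otimes>\<^bsub>M\<^esub> word_prod M w = \<one>\<^bsub>M\<^esub>" by blast
    have "word_prod M w \<in> carrier M"
      using word_prod_carrier[OF assms(1)] w(1) A unfolding fin_mon_gen_def by blast
    with w show ?thesis by blast
  qed
  show ?thesis
  proof (rule monoid.group_l_invI[OF assms(1)])
    fix x assume x: "x \<in> carrier M"
    obtain y where y: "y \<in> carrier M" "x \<otimes>\<^bsub>M\<^esub> y = \<one>\<^bsub>M\<^esub>" using rinv[OF x] by blast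
    obtain z where z: "z \<in> carrier M" "y \<otimes>\<^bsub>M\<^esub> z = \<one>\<^bsub>M\<^esub>" using rinv[OF y(1)] by blast
    have "x = x \<otimes>\<^bsub>M\<^esub> (y \<otimes>\<^bsub>M\<^esub> z)" using z x assms(1) by (simp add: monoid.r_one)
    also have "\<dots> = (x \<otimes>\<^bsub>M\<^esub> y) \<otimes>\<^bsub>M\<^esub> z" using monoid.m_assoc[OF assms(1) x y(1) z(1)] by simp
    also have "\<dots> = z" using y z assms(1) by (simp add: monoid.l_one)
    finally have "x = z" .
    then have "y \<otimes>\<^bsub>M\<^esub> x = \<one>\<^bsub>M\<^esub>" using z by simp
    then show "\<exists>y\<in>carrier M. y \<otimes>\<^bsub>M\<^esub> x = \<one>\<^bsub>M\<^esub>" using y by blast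
  qed
qed

end
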